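(* Assume $\mathcal{T}$ is a tree. Fix $(i_0,j_0)\in\mathcal{E}$ such that $\mu_{i_0j_0}\ge\theta_{i_0}$. There is a constant $m_7$ such that for all measurable locally bounded functions $w_i,x_i$ ($i\in\mathcal{I}$) and $\psi_{ij}$ (with $\psi_{ij}=0$ for $i\not\sim j$) on $[0,\infty)$ satisfying, with $y(t):=(e\cdot x(t))^+e_{i_0}\in\mathbb{R}^I$ and $z(t):=(e\cdot x(t))^-e_{j_0}\in\mathbb{R}^J$, $$x_i(t)=w_i(t)-\sum_{j\in\mathcal{J}}\mu_{ij}\int_0^t\psi_{ij}(s)ds-\theta_i\int_0^ty_i(s)ds,\quad \sum_{j\in\mathcal{J}}\psi_{ij}=x_i-y_i\ (i\in\mathcal{I}),\quad \sum_{i\in\mathcal{I}}\psi_{ij}=-z_j\ (j\in\mathcal{J}),$$ we have $\|x(t)\|\le m_7(1+t)^{m_7}\|w\|_t^*$ for all $t\ge0$, where $m_7$ does not depend on $w$ and $t$.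
   Context: $\mathcal{I}=\{1,\dots,I\}$, $\mathcal{J}=\{I+1,\dots,I+J\}$, $\mathcal{E}\subset\mathcal{I}\times\mathcal{J}$, $i\sim j$ iff $(i,j)\in\mathcal{E}$; $\mathcal{T}$ is the bipartite graph with vertices $\mathcal{I}\cup\mathcal{J}$ and edges $\mathcal{E}$. Constants $\mu_{ij}>0$ for $(i,j)\in\mathcal{E}$, $\mu_{ij}=0$ otherwise, $\theta_i\ge0$. $e=(1,\dots,1)'$; $e_{i_0}$ (resp. $e_{j_0}$) denotes the coordinate unit vector in $\mathbb{R}^I$ (resp. $\mathbb{R}^J$, indexed by $\mathcal{J}$) for coordinate $i_0$ (resp. $j_0$); $a^\pm$ positive/negative parts. $\|x\|=\sum|x_i|$, $\|w\|_t^*=\sup_{s\le t}\|w(s)\|$. *)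

theory Defs
  imports "HOL-Analysis.Analysis"
begin

text \<open>Index sets: customer classes {1..nI}, server pools {nI+1..nI+nJ}.\<close>
definition Iset :: "nat \<Rightarrow> nat set" where "Iset nI = {1..nI}"
definition Jset :: "nat \<Rightarrow> nat \<Rightarrow> nat set" where "Jset nI nJ = {nI+1..nI+nJ}"

definition und_edges :: "(nat \<times> nat) set \<Rightarrow> (nat \<times> nat) set" where
  "und_edges E = E \<union> converse E"

text \<open>The graph on vertices {1..nI+nJ} with edges E is a tree: it is connected and
  acyclic, where acyclicity (for a simple graph) means that every edge is a bridge,
  i.e. removing it disconnects its endpoints.\<close>
definition is_tree :: "nat \<Rightarrow> nat \<Rightarrow> (nat \<times> nat) set \<Rightarrow> bool" where
  "is_tree nI nJ E \<longleftrightarrow>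
     E \<subseteq> Iset nI \<times> Jset nI nJ \<and>
     (\<forall>u\<in>Iset nI \<union> Jset nI nJ. \<forall>v\<in>Iset nI \<union> Jset nI nJ. (u, v) \<in> (und_edges E)\<^sup>*) \<and>
     (\<forall>(a, b)\<in>E. (a, b) \<notin> (und_edges (E - {(a, b)}))\<^sup>*)"

definition pospart :: "real \<Rightarrow> real" where "pospart a = max a 0"
definition negpart :: "real \<Rightarrow> real" where "negpart a = max (- a) 0"

definition meas_locbdd :: "(real \<Rightarrow> real) \<Rightarrow> bool" where
  "meas_locbdd f \<longleftrightarrow> f \<in> borel_measurable (restrict_space lborel {0..}) \<and>
     (\<forall>T\<ge>0. bounded (f ` {0..T}))"

definition supnorm :: "nat set \<Rightarrow> (nat \<Rightarrow> real \<Rightarrow> real) \<Rightarrow> real \<Rightarrow> real" where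
  "supnorm A w t = (SUP s\<in>{0..t}. (\<Sum>i\<in>A. \<bar>w i s\<bar>))"

end

theory Submission
  imports Defs
begin

lemma ml_bound:
  assumes "meas_locbdd f" "0 \<le> T"
  shows "\<exists>B. \<forall>s\<in>{0..T}. \<bar>f s\<bar> \<le> B"
  using assms unfolding meas_locbdd_def bounded_iff by auto

lemma ml_integ:
  assumes "meas_locbdd f" "0 \<le> t"
  shows "f integrable_on {0..t}" "(LBINT s=0..t. f s) = integral {0..t} f"
proof -
  obtain B where B: "\<forall>s\<in>{0..t}. \<bar>f s\<bar> \<le> B" using ml_bound[OF assms] by blast
  have m: "(\<lambda>x. indicator {0..} x *\<^sub>R f x) \<in> borel_measurable lborel"
    using assms(1) unfolding meas_locbdd_def
    by (subst (asm) borel_measurable_restrict_space_iff) auto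
  have eq: "(\<lambda>x. indicator {0..t} x *\<^sub>R f x) = (\<lambda>x. indicator {0..t} x *\<^sub>R (indicator {0..} x *\<^sub>R f x))"
    by (auto simp: indicator_def)
  have m2: "(\<lambda>x. indicator {0..t} x *\<^sub>R f x) \<in> borel_measurable lborel"
    unfolding eq using m by measurable
  have si: "set_integrable lborel {0..t} f"
    unfolding set_integrable_def
  proof (rule integrableI_bounded_set[where A="{0..t}" and B=B])
    show "AE x in lborel. x \<in> {0..t} \<longrightarrow> norm (indicator {0..t} x *\<^sub>R f x) \<le> B"
      using B by auto
  qed (use m2 assms(2) in auto)
  show "f integrable_on {0..t}" using set_borel_integral_eq_integral(1)[OF si] .
  show "(LBINT s=0..t. f s) = integral {0..t} f"
    using set_borel_integral_eq_integral(2)[OF si] interval_integral_Icc[OF assms(2), of f] by (simp add: zero_ereal_def)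
qed

lemma ml_iff: "meas_locbdd f \<longleftrightarrow> f \<in> borel_measurable (restrict_space lborel {0..}) \<and>
     (\<forall>T\<ge>0. \<exists>B. \<forall>s\<in>{0..T}. \<bar>f s\<bar> \<le> B)"
  unfolding meas_locbdd_def bounded_iff by auto

lemma ml_sum:
  assumes "finite A" "\<And>k. k \<in> A \<Longrightarrow> meas_locbdd (f k)"
  shows "meas_locbdd (\<lambda>s. \<Sum>k\<in>A. f k s)"
  using assms
proof (induction A rule: finite_induct)
  case empty
  then show ?case by (simp add: ml_iff) (meson order_refl)
next
  case (insert a A)
  have h1: "meas_locbdd (f a)" and h2: "meas_locbdd (\<lambda>s. \<Sum>k\<in>A. f k s)" using insert by auto
  show ?case unfolding sum.insert[OF insert(1,2)] ml_iff
  proof safe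
    show "(\<lambda>s. f a s + (\<Sum>k\<in>A. f k s)) \<in> borel_measurable (restrict_space lborel {0..})"
      using h1 h2 unfolding ml_iff by (intro borel_measurable_add) auto
    fix T :: real assume "0 \<le> T"
    then obtain B1 B2 where "\<forall>s\<in>{0..T}. \<bar>f a s\<bar> \<le> B1" "\<forall>s\<in>{0..T}. \<bar>\<Sum>k\<in>A. f k s\<bar> \<le> B2"
      using h1 h2 unfolding ml_iff by meson
    then show "\<exists>B. \<forall>s\<in>{0..T}. \<bar>f a s + (\<Sum>k\<in>A. f k s)\<bar> \<le> B"
      by (intro exI[of _ "B1+B2"]) (smt (verit))
  qed
qed

lemma ml_cmult:
  assumes "meas_locbdd f" shows "meas_locbdd (\<lambda>s. c * f s)"
  unfolding ml_iff
proof safe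
  show "(\<lambda>s. c * f s) \<in> borel_measurable (restrict_space lborel {0..})"
    using assms unfolding ml_iff by auto
  fix T :: real assume "0 \<le> T"
  then obtain B where "\<forall>s\<in>{0..T}. \<bar>f s\<bar> \<le> B" using assms unfolding ml_iff by meson
  then show "\<exists>B. \<forall>s\<in>{0..T}. \<bar>c * f s\<bar> \<le> B"
    by (intro exI[of _ "\<bar>c\<bar>*B"]) (auto simp: abs_mult intro: mult_left_mono)
qed

lemma ml_comp:
  assumes "meas_locbdd f" and "\<And>a. \<bar>g a\<bar> \<le> \<bar>a\<bar>" and "g \<in> borel_measurable borel"
  shows "meas_locbdd (\<lambda>s. g (f s))"
  unfolding ml_iff
proof safe
  show "(\<lambda>s. g (f s)) \<in> borel_measurable (restrict_space lborel {0..})"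
    using assms unfolding ml_iff by (auto intro: measurable_compose)
  fix T :: real assume "0 \<le> T"
  then obtain B where "\<forall>s\<in>{0..T}. \<bar>f s\<bar> \<le> B" using assms unfolding ml_iff by meson
  then show "\<exists>B. \<forall>s\<in>{0..T}. \<bar>g (f s)\<bar> \<le> B"
    using assms(2) by (intro exI[of _ B]) (meson order_trans)
qed

lemma pospart_meas: "pospart \<in> borel_measurable borel"
  unfolding pospart_def[abs_def] by measurable
lemma negpart_meas: "negpart \<in> borel_measurable borel"
  unfolding negpart_def[abs_def] by measurable
lemma pospart_abs: "\<bar>pospart a\<bar> \<le> \<bar>a\<bar>" by (simp add: pospart_def)
lemma negpart_abs: "\<bar>negpart a\<bar> \<le> \<bar>a\<bar>" by (simp add: negpart_def)

lemma scalar_bound_one: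
  fixes S V h :: "real \<Rightarrow> real"
  assumes T: "0 \<le> T" and Vb: "\<forall>s\<in>{0..T}. \<bar>V s\<bar> \<le> M"
  and hi: "h integrable_on {0..T}"
  and eq: "\<forall>s\<in>{0..T}. S s = V s + integral {0..s} h"
  and sg: "\<forall>r\<in>{0..T}. S r > 0 \<longrightarrow> h r \<le> 0"
  shows "integral {0..T} h \<le> M"
proof (rule ccontr)
  assume nc: "\<not> integral {0..T} h \<le> M"
  define U where "U = (\<lambda>s. integral {0..s} h)"
  have cont: "continuous_on {0..T} U" unfolding U_def by (rule indefinite_integral_continuous_1[OF hi])
  define A where "A = {0..T} \<inter> U -` {..M}"
  have cl: "closed A" unfolding A_def by (rule continuous_closed_preimage[OF cont]) auto
  have M0: "0 \<le> M" using Vb T by (meson abs_ge_zero atLeastAtMost_iff order_refl order_trans)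
  have "0 \<in> A" unfolding A_def U_def using T M0 by auto
  hence ne: "A \<noteq> {}" by auto
  have bdd: "bdd_above A" unfolding A_def by (auto intro: bdd_aboveI[of _ T])
  define \<tau> where "\<tau> = Sup A"
  have tA: "\<tau> \<in> A" unfolding \<tau>_def by (rule closed_contains_Sup[OF ne bdd cl])
  hence t0: "0 \<le> \<tau>" "\<tau> \<le> T" and Ut: "U \<tau> \<le> M" unfolding A_def by auto
  have "\<tau> \<noteq> T" using Ut nc unfolding U_def by auto
  hence tT: "\<tau> < T" using t0 by auto
  have pos: "h r \<le> 0" if r: "r \<in> {\<tau><..T}" for r
  proof -
    have "r \<notin> A" using r bdd unfolding \<tau>_def by (meson cSup_upper greaterThanAtMost_iff not_le)
    hence "U r > M" using r t0 unfolding A_def by auto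
    moreover have "\<bar>V r\<bar> \<le> M" using Vb r t0 by auto
    moreover have "S r = V r + U r" using eq r t0 unfolding U_def by auto
    ultimately have "S r > 0" by linarith
    thus ?thesis using sg r t0 by auto
  qed
  have hi2: "h integrable_on {\<tau>..T}" using t0 by (intro integrable_subinterval_real[OF hi]) auto
  define h' where "h' = (\<lambda>r. if r = \<tau> then 0 else h r)"
  have e1: "integral {\<tau>..T} h = integral {\<tau>..T} h'"
    by (rule integral_spike[of "{\<tau>}"]) (auto simp: h'_def)
  have hi3: "h' integrable_on {\<tau>..T}"
    by (rule integrable_spike[OF hi2, of "{\<tau>}"]) (auto simp: h'_def)
  have "integral {\<tau>..T} h' \<le> integral {\<tau>..T} (\<lambda>_. 0::real)"
    by (rule integral_le[OF hi3]) (auto simp: h'_def intro!: pos)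
  hence le0: "integral {\<tau>..T} h \<le> 0" using e1 by simp
  have "integral {0..\<tau>} h + integral {\<tau>..T} h = integral {0..T} h"
    using Henstock_Kurzweil_Integration.integral_combine[OF t0 hi] .
  hence "integral {0..T} h \<le> M" using le0 Ut unfolding U_def by linarith
  thus False using nc by simp
qed

lemma scalar_bound:
  fixes S V h :: "real \<Rightarrow> real"
  assumes T: "0 \<le> T" and Vb: "\<forall>s\<in>{0..T}. \<bar>V s\<bar> \<le> M"
  and hi: "h integrable_on {0..T}"
  and eq: "\<forall>s\<in>{0..T}. S s = V s + integral {0..s} h"
  and sg: "\<forall>r\<in>{0..T}. (S r > 0 \<longrightarrow> h r \<le> 0) \<and> (S r < 0 \<longrightarrow> h r \<ge> 0)"
  shows "\<bar>S T\<bar> \<le> 2 * M"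
proof -
  have a: "integral {0..T} h \<le> M"
    by (rule scalar_bound_one[OF T Vb hi eq]) (use sg in auto)
  have "integral {0..T} (\<lambda>r. - h r) \<le> M"
  proof (rule scalar_bound_one[where S="\<lambda>r. - S r" and V="\<lambda>r. - V r"])
    show "(\<lambda>r. - h r) integrable_on {0..T}" using hi by (rule integrable_neg)
    show "\<forall>s\<in>{0..T}. - S s = - V s + integral {0..s} (\<lambda>r. - h r)"
      using eq by (simp add: integral_neg)
  qed (use T Vb sg in auto)
  hence b: "- integral {0..T} h \<le> M" by (simp add: integral_neg)
  have "S T = V T + integral {0..T} h" using eq T by auto
  moreover have "\<bar>V T\<bar> \<le> M" using Vb T by auto
  ultimately show ?thesis using a b by linarith
qed

lemma flow_identity:
  fixes \<psi> :: "nat \<Rightarrow> nat \<Rightarrow> real"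
  assumes fin: "finite I" "finite J" and ES: "E \<subseteq> I \<times> J" and e: "(i,j) \<in> E"
    and z: "\<forall>k\<in>I. \<forall>l\<in>J. (k,l) \<notin> E \<longrightarrow> \<psi> k l = 0"
    and cl: "\<forall>(k,l)\<in>E. (k,l) \<noteq> (i,j) \<longrightarrow> (k\<in>D \<longleftrightarrow> l\<in>D)"
  shows "(\<Sum>k\<in>D\<inter>I. \<Sum>l\<in>J. \<psi> k l) - (\<Sum>l\<in>D\<inter>J. \<Sum>k\<in>I. \<psi> k l)
         = (of_bool (i\<in>D) - of_bool (j\<in>D)) * \<psi> i j"
proof -
  define c where "c = (\<lambda>(k,l). (of_bool (k\<in>D) - of_bool (l\<in>D)) * \<psi> k l)"
  have restr: "(\<Sum>k\<in>D\<inter>A. g k) = (\<Sum>k\<in>A. of_bool (k\<in>D) * g k)" if "finite A" for A and g :: "nat \<Rightarrow> real"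
  proof -
    have "(\<Sum>k\<in>D\<inter>A. g k) = (\<Sum>k\<in>A\<inter>D. g k)" by (simp add: Int_commute)
    also have "\<dots> = (\<Sum>k\<in>A. if k\<in>D then g k else 0)" by (rule sum.inter_restrict[OF that])
    also have "\<dots> = (\<Sum>k\<in>A. of_bool (k\<in>D) * g k)" by (intro sum.cong) auto
    finally show ?thesis .
  qed
  have s1: "(\<Sum>k\<in>D\<inter>I. \<Sum>l\<in>J. \<psi> k l) = (\<Sum>k\<in>I. \<Sum>l\<in>J. of_bool (k\<in>D) * \<psi> k l)"
    by (simp add: restr[OF fin(1)] sum_distrib_left)
  have s2: "(\<Sum>l\<in>D\<inter>J. \<Sum>k\<in>I. \<psi> k l) = (\<Sum>k\<in>I. \<Sum>l\<in>J. of_bool (l\<in>D) * \<psi> k l)"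
    by (simp add: restr[OF fin(2)] sum_distrib_left sum.swap[of _ I])
  have "(\<Sum>k\<in>D\<inter>I. \<Sum>l\<in>J. \<psi> k l) - (\<Sum>l\<in>D\<inter>J. \<Sum>k\<in>I. \<psi> k l) = (\<Sum>k\<in>I. \<Sum>l\<in>J. c (k,l))"
    unfolding s1 s2 c_def by (simp add: sum_subtractf[symmetric] left_diff_distrib)
  also have "\<dots> = (\<Sum>p\<in>I\<times>J. c p)" by (simp add: sum.cartesian_product)
  also have "\<dots> = c (i,j) + (\<Sum>p\<in>I\<times>J - {(i,j)}. c p)"
    using e ES fin by (subst sum.remove[of _ "(i,j)"]) auto
  also have "(\<Sum>p\<in>I\<times>J - {(i,j)}. c p) = 0"
  proof (rule sum.neutral, rule ballI)
    fix p assume p: "p \<in> I\<times>J - {(i,j)}"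
    obtain k l where pkl: "p = (k,l)" by (cases p)
    have kl: "k \<in> I" "l \<in> J" "(k,l) \<noteq> (i,j)" using p pkl by auto
    show "c p = 0"
    proof (cases "(k,l) \<in> E")
      case True thus ?thesis using cl kl pkl unfolding c_def by auto
    next
      case False thus ?thesis using z kl pkl unfolding c_def by auto
    qed
  qed
  finally show ?thesis unfolding c_def by simp
qed

locale treeG =
  fixes nI nJ :: nat and E :: "(nat \<times> nat) set" and i0 j0 :: nat
  assumes tree: "is_tree nI nJ E" and edge0: "(i0,j0) \<in> E"
begin

abbreviation "II \<equiv> Iset nI"
abbreviation "JJ \<equiv> Jset nI nJ"

definition F :: "nat \<times> nat \<Rightarrow> (nat \<times> nat) set" where "F e = und_edges (E - {e})"
definition Rch :: "nat \<times> nat \<Rightarrow> nat set" where "Rch e = {v. (i0, v) \<in> (F e)\<^sup>*}"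
definition D :: "nat \<times> nat \<Rightarrow> nat set" where "D e = (II \<union> JJ) - Rch e"

lemma ES: "E \<subseteq> II \<times> JJ" using tree unfolding is_tree_def by auto
lemma finI: "finite II" and finJ: "finite JJ" by (auto simp: Iset_def Jset_def)
lemma finE: "finite E" using ES finI finJ by (meson finite_SigmaI finite_subset)
lemma disj: "II \<inter> JJ = {}" by (auto simp: Iset_def Jset_def)
lemma conn: "u \<in> II \<union> JJ \<Longrightarrow> v \<in> II \<union> JJ \<Longrightarrow> (u,v) \<in> (und_edges E)\<^sup>*"
  using tree unfolding is_tree_def by blast
lemma bridge: "(a,b) \<in> E \<Longrightarrow> (a,b) \<notin> (F (a,b))\<^sup>*"
  using tree unfolding is_tree_def F_def by blast
lemma i0I: "i0 \<in> II" and j0J: "j0 \<in> JJ" using edge0 ES by auto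
lemma finD: "finite (D e)" using finI finJ unfolding D_def by auto
lemma D_sub: "D e \<subseteq> II \<union> JJ" unfolding D_def by auto

lemma F_sym: "(u,v) \<in> (F e)\<^sup>* \<Longrightarrow> (v,u) \<in> (F e)\<^sup>*"
proof -
  assume "(u,v) \<in> (F e)\<^sup>*"
  hence "(v,u) \<in> ((F e)\<inverse>)\<^sup>*" by (rule rtrancl_converseI)
  moreover have "(F e)\<inverse> = F e" unfolding F_def und_edges_def by auto
  ultimately show ?thesis by simp
qed

lemma i0_notin: "i0 \<notin> D e" unfolding D_def Rch_def by auto

lemma reach_split:
  assumes "(u,v) \<in> (und_edges E)\<^sup>*" "(u,v) \<notin> (F (a,b))\<^sup>*"
  shows "(u,a) \<in> (F (a,b))\<^sup>* \<or> (u,b) \<in> (F (a,b))\<^sup>*"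
  using assms
proof (induction rule: rtrancl_induct)
  case base thus ?case by simp
next
  case (step y z)
  show ?case
  proof (cases "(u,y) \<in> (F (a,b))\<^sup>*")
    case True
    show ?thesis
    proof (cases "(y,z) \<in> F (a,b)")
      case True2: True
      hence "(u,z) \<in> (F (a,b))\<^sup>*" using True by (meson rtrancl.rtrancl_into_rtrancl)
      thus ?thesis using step by simp
    next
      case False
      hence "(y,z) = (a,b) \<or> (y,z) = (b,a)" using step(2) unfolding F_def und_edges_def by auto
      thus ?thesis using True by auto
    qed
  next
    case False thus ?thesis using step by auto
  qed
qed

lemma one_end:
  assumes ab: "(a,b) \<in> E"
  shows "a \<in> D (a,b) \<longleftrightarrow> b \<notin> D (a,b)"
proof -
  have abV: "a \<in> II \<union> JJ" "b \<in> II \<union> JJ" using ab ES by auto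
  have "\<not> (a \<in> Rch (a,b) \<and> b \<in> Rch (a,b))"
  proof
    assume "a \<in> Rch (a,b) \<and> b \<in> Rch (a,b)"
    hence "(a,i0) \<in> (F (a,b))\<^sup>*" "(i0,b) \<in> (F (a,b))\<^sup>*" unfolding Rch_def using F_sym by auto
    hence "(a,b) \<in> (F (a,b))\<^sup>*" by auto
    thus False using bridge[OF ab] by simp
  qed
  moreover have "a \<in> Rch (a,b) \<or> b \<in> Rch (a,b)"
  proof (cases "(i0,a) \<in> (F (a,b))\<^sup>*")
    case True thus ?thesis unfolding Rch_def by auto
  next
    case False
    have "(i0,a) \<in> (und_edges E)\<^sup>*" using conn i0I abV by auto
    from reach_split[OF this False] show ?thesis unfolding Rch_def by auto
  qed
  ultimately show ?thesis using abV unfolding D_def by auto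
qed

lemma closedD:
  assumes "(k,l) \<in> E" "(k,l) \<noteq> e"
  shows "k \<in> D e \<longleftrightarrow> l \<in> D e"
proof -
  have kl: "(k,l) \<in> F e" "(l,k) \<in> F e" using assms unfolding F_def und_edges_def by auto
  have "k \<in> Rch e \<longleftrightarrow> l \<in> Rch e" unfolding Rch_def
    using kl by (auto intro: rtrancl_into_rtrancl)
  moreover have "k \<in> II \<union> JJ" "l \<in> II \<union> JJ" using assms ES by auto
  ultimately show ?thesis unfolding D_def by auto
qed

lemma j0_notin: "e \<noteq> (i0,j0) \<Longrightarrow> j0 \<notin> D e"
  by (metis closedD edge0 i0_notin)

lemma j0_in: "j0 \<in> D (i0,j0)"
  using one_end[OF edge0] i0_notin by blast

lemma D_ne: "e \<in> E \<Longrightarrow> card (D e) \<ge> 1"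
  using one_end finD by (cases e) (metis One_nat_def Suc_leI card_gt_0_iff empty_iff)

lemma D_mono:
  assumes e: "e \<in> E" and e': "(k,l) \<in> E" and kD: "k \<in> D e" and lD: "l \<in> D e"
  shows "card (D (k,l)) < card (D e)"
proof -
  have sub: "Rch e \<subseteq> Rch (k,l)"
  proof
    fix v assume "v \<in> Rch e"
    hence "(i0,v) \<in> (F e)\<^sup>*" unfolding Rch_def by simp
    thus "v \<in> Rch (k,l)"
    proof (induction rule: rtrancl_induct)
      case base thus ?case unfolding Rch_def by simp
    next
      case (step y z)
      have yR: "y \<in> Rch e" using step(1) unfolding Rch_def by simp
      have yV: "y \<in> II \<union> JJ" using step(2) ES unfolding F_def und_edges_def by auto
      have "y \<notin> D e" using yR unfolding D_def by simp
      hence "y \<noteq> k" "y \<noteq> l" using kD lD by auto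
      hence "(y,z) \<in> F (k,l)" using step(2) unfolding F_def und_edges_def by auto
      thus ?case using step(3) unfolding Rch_def by (meson mem_Collect_eq rtrancl.rtrancl_into_rtrancl)
    qed
  qed
  hence "D (k,l) \<subseteq> D e" unfolding D_def by auto
  moreover have "D (k,l) \<noteq> D e" using one_end[OF e'] kD lD by auto
  ultimately show ?thesis using finD by (meson psubsetI psubset_card_mono)
qed

lemma D_card_le: "card (D e) \<le> nI + nJ"
proof -
  have "card (D e) \<le> card (II \<union> JJ)" using D_sub finI finJ by (intro card_mono) auto
  also have "\<dots> \<le> card II + card JJ" by (rule card_Un_le)
  finally show ?thesis by (simp add: Iset_def Jset_def)
qed

end

locale sys = treeG +
  fixes \<mu> :: "nat \<Rightarrow> nat \<Rightarrow> real" and \<theta> :: "nat \<Rightarrow> real"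
    and w x :: "nat \<Rightarrow> real \<Rightarrow> real" and \<psi> :: "nat \<Rightarrow> nat \<Rightarrow> real \<Rightarrow> real"
  assumes mu_pos: "\<And>i j. (i, j) \<in> E \<Longrightarrow> \<mu> i j > 0"
    and mu_zero: "\<And>i j. (i, j) \<notin> E \<Longrightarrow> \<mu> i j = 0"
    and theta_nonneg: "\<And>i. i \<in> Iset nI \<Longrightarrow> \<theta> i \<ge> 0"
    and H1: "\<forall>i\<in>Iset nI. meas_locbdd (w i) \<and> meas_locbdd (x i)"
    and H2: "\<forall>i\<in>Iset nI. \<forall>j\<in>Jset nI nJ. meas_locbdd (\<psi> i j)"
    and H3: "\<forall>i\<in>Iset nI. \<forall>j\<in>Jset nI nJ. (i, j) \<notin> E \<longrightarrow> (\<forall>t\<ge>0. \<psi> i j t = 0)"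
    and H4: "\<forall>i\<in>Iset nI. \<forall>t\<ge>0.
          x i t = w i t - (\<Sum>j\<in>Jset nI nJ. \<mu> i j * (LBINT s=0..t. \<psi> i j s))
                  - \<theta> i * (LBINT s=0..t. (if i = i0 then pospart (\<Sum>k\<in>Iset nI. x k s) else 0))"
    and H5: "\<forall>i\<in>Iset nI. \<forall>t\<ge>0. (\<Sum>j\<in>Jset nI nJ. \<psi> i j t) = x i t - (if i = i0 then pospart (\<Sum>k\<in>Iset nI. x k t) else 0)"
    and H6: "\<forall>j\<in>Jset nI nJ. \<forall>t\<ge>0. (\<Sum>i\<in>Iset nI. \<psi> i j t) = - (if j = j0 then negpart (\<Sum>k\<in>Iset nI. x k t) else 0)"
begin

definition Sx :: "real \<Rightarrow> real" where "Sx t = (\<Sum>k\<in>II. x k t)"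
definition XD :: "nat set \<Rightarrow> real \<Rightarrow> real" where "XD A t = (\<Sum>k\<in>A\<inter>II. x k t)"
definition B :: "real \<Rightarrow> real" where "B t = supnorm II w t"
definition Mmu :: real where "Mmu = (\<Sum>k\<in>II. \<Sum>l\<in>JJ. \<mu> k l)"
definition K :: real where "K = 2 * (1 + Mmu)"

lemma mu_nonneg: "0 \<le> \<mu> k l"
  using mu_pos mu_zero by (cases "(k,l) \<in> E") (auto intro: less_imp_le)

lemma Mmu_nonneg: "0 \<le> Mmu" unfolding Mmu_def by (intro sum_nonneg) (auto intro: mu_nonneg)
lemma K_ge1: "1 \<le> K" unfolding K_def using Mmu_nonneg by simp

lemma Mmu_cart: "Mmu = (\<Sum>p\<in>II\<times>JJ. \<mu> (fst p) (snd p))"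
  unfolding Mmu_def by (simp add: sum.cartesian_product case_prod_beta)

lemma x_ml: "k \<in> II \<Longrightarrow> meas_locbdd (x k)" using H1 by auto
lemma w_ml: "k \<in> II \<Longrightarrow> meas_locbdd (w k)" using H1 by auto
lemma psi_ml: "k \<in> II \<Longrightarrow> l \<in> JJ \<Longrightarrow> meas_locbdd (\<psi> k l)" using H2 by auto

lemma Sx_ml: "meas_locbdd Sx"
  unfolding Sx_def[abs_def] by (rule ml_sum[OF finI x_ml])
lemma XD_ml: "meas_locbdd (XD A)"
  unfolding XD_def[abs_def] by (rule ml_sum) (use finI x_ml in auto)
lemma pos_ml: "meas_locbdd (\<lambda>s. pospart (Sx s))"
  by (rule ml_comp[OF Sx_ml pospart_abs pospart_meas])
lemma neg_ml: "meas_locbdd (\<lambda>s. negpart (Sx s))"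
  by (rule ml_comp[OF Sx_ml negpart_abs negpart_meas])

lemma absw_ml: "meas_locbdd (\<lambda>s. \<Sum>k\<in>II. \<bar>w k s\<bar>)"
  by (rule ml_sum[OF finI]) (rule ml_comp[OF w_ml], auto)

lemma wsum_bdd: "0 \<le> t \<Longrightarrow> bdd_above ((\<lambda>s. \<Sum>k\<in>II. \<bar>w k s\<bar>) ` {0..t})"
proof -
  assume "0 \<le> t"
  then obtain C where "\<forall>s\<in>{0..t}. \<bar>\<Sum>k\<in>II. \<bar>w k s\<bar>\<bar> \<le> C" using ml_bound[OF absw_ml] by blast
  thus ?thesis by (intro bdd_aboveI[of _ C]) auto
qed

lemma B_ge: "0 \<le> s \<Longrightarrow> s \<le> t \<Longrightarrow> (\<Sum>k\<in>II. \<bar>w k s\<bar>) \<le> B t"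
  unfolding B_def supnorm_def by (rule cSUP_upper) (auto intro: wsum_bdd)

lemma B_nonneg: "0 \<le> t \<Longrightarrow> 0 \<le> B t"
  using B_ge[of 0 t] by (meson order_trans sum_nonneg abs_ge_zero order_refl)

lemma B_mono: "0 \<le> s \<Longrightarrow> s \<le> t \<Longrightarrow> B s \<le> B t"
  unfolding B_def supnorm_def by (rule cSUP_subset_mono) (auto intro: wsum_bdd)

lemma wD_bound: "0 \<le> s \<Longrightarrow> s \<le> t \<Longrightarrow> \<bar>\<Sum>k\<in>A\<inter>II. w k s\<bar> \<le> B t"
proof -
  assume st: "0 \<le> s" "s \<le> t"
  have "\<bar>\<Sum>k\<in>A\<inter>II. w k s\<bar> \<le> (\<Sum>k\<in>A\<inter>II. \<bar>w k s\<bar>)" by (rule sum_abs)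
  also have "\<dots> \<le> (\<Sum>k\<in>II. \<bar>w k s\<bar>)" by (rule sum_mono2) (use finI in auto)
  also have "\<dots> \<le> B t" by (rule B_ge[OF st])
  finally show ?thesis .
qed

lemma flow_at:
  assumes e: "(a,b) \<in> E" and t: "0 \<le> t"
  shows "(\<Sum>k\<in>D (a,b)\<inter>II. \<Sum>l\<in>JJ. \<psi> k l t) - (\<Sum>l\<in>D (a,b)\<inter>JJ. \<Sum>k\<in>II. \<psi> k l t)
         = (of_bool (a\<in>D (a,b)) - of_bool (b\<in>D (a,b))) * \<psi> a b t"
  by (rule flow_identity[OF finI finJ ES e]) (use H3 t closedD in auto)

lemma psi_eq:
  assumes e: "(a,b) \<in> E" and ne: "(a,b) \<noteq> (i0,j0)" and t: "0 \<le> t"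
  shows "XD (D (a,b)) t = (of_bool (a\<in>D (a,b)) - of_bool (b\<in>D (a,b))) * \<psi> a b t"
proof -
  have 1: "(\<Sum>k\<in>D (a,b)\<inter>II. \<Sum>l\<in>JJ. \<psi> k l t) = XD (D (a,b)) t"
    unfolding XD_def using H5 t i0_notin by (intro sum.cong) auto
  have 2: "(\<Sum>l\<in>D (a,b)\<inter>JJ. \<Sum>k\<in>II. \<psi> k l t) = 0"
    using H6 t j0_notin[OF ne] by (intro sum.neutral) auto
  show ?thesis using flow_at[OF e t] 1 2 by simp
qed

lemma psi_abs:
  assumes e: "(a,b) \<in> E" and ne: "(a,b) \<noteq> (i0,j0)" and t: "0 \<le> t"
  shows "\<bar>\<psi> a b t\<bar> = \<bar>XD (D (a,b)) t\<bar>"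
  using psi_eq[OF assms] one_end[OF e] by (cases "a \<in> D (a,b)") auto

lemma psi_pos:
  assumes e: "(a,b) \<in> E" and aD: "a \<in> D (a,b)" and t: "0 \<le> t"
  shows "\<psi> a b t = XD (D (a,b)) t"
proof -
  have ne: "(a,b) \<noteq> (i0,j0)" using aD i0_notin by auto
  show ?thesis using psi_eq[OF e ne t] one_end[OF e] aD by auto
qed

lemma psi0_eq:
  assumes t: "0 \<le> t"
  shows "\<psi> i0 j0 t = - negpart (Sx t) - XD (D (i0,j0)) t"
proof -
  have 1: "(\<Sum>k\<in>D (i0,j0)\<inter>II. \<Sum>l\<in>JJ. \<psi> k l t) = XD (D (i0,j0)) t"
    unfolding XD_def using H5 t i0_notin by (intro sum.cong) auto
  have "(\<Sum>l\<in>D (i0,j0)\<inter>JJ. \<Sum>k\<in>II. \<psi> k l t) = (\<Sum>l\<in>D (i0,j0)\<inter>JJ. (if l = j0 then - negpart (Sx t) else 0))"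
    using H6 t unfolding Sx_def by (intro sum.cong) auto
  also have "\<dots> = - negpart (Sx t)" using j0_in j0J finD by (simp add: sum.delta')
  finally have 2: "(\<Sum>l\<in>D (i0,j0)\<inter>JJ. \<Sum>k\<in>II. \<psi> k l t) = - negpart (Sx t)" .
  show ?thesis using flow_at[OF edge0 t] 1 2 i0_notin j0_in by simp
qed

lemma XD_eq:
  assumes t: "0 \<le> t" and A: "i0 \<notin> A"
  shows "XD A t = (\<Sum>k\<in>A\<inter>II. w k t) - (\<Sum>k\<in>A\<inter>II. \<Sum>l\<in>JJ. \<mu> k l * integral {0..t} (\<psi> k l))"
proof -
  have "XD A t = (\<Sum>k\<in>A\<inter>II. w k t - (\<Sum>l\<in>JJ. \<mu> k l * integral {0..t} (\<psi> k l)))"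
    unfolding XD_def
  proof (rule sum.cong[OF refl])
    fix k assume k: "k \<in> A \<inter> II"
    hence "k \<noteq> i0" using A by auto
    thus "x k t = w k t - (\<Sum>l\<in>JJ. \<mu> k l * integral {0..t} (\<psi> k l))"
      using H4 k t ml_integ(2)[OF psi_ml t] by auto
  qed
  thus ?thesis by (simp add: sum_subtractf)
qed

end

lemma int_abs_bound:
  fixes g :: "real \<Rightarrow> real"
  assumes gi: "g integrable_on {0..s}" and s: "0 \<le> s" and b: "\<forall>r\<in>{0..s}. \<bar>g r\<bar> \<le> Q"
  shows "\<bar>integral {0..s} g\<bar> \<le> s * Q"
proof -
  have "norm (integral {0..s} g) \<le> integral {0..s} (\<lambda>_. Q)"
    by (rule integral_norm_bound_integral[OF gi]) (use b in auto)
  thus ?thesis using s by simp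
qed

lemma poly_mono:
  fixes K r t Br Bt :: real
  assumes "1 \<le> K" "c \<le> m" "0 \<le> r" "r \<le> t" "0 \<le> Br" "Br \<le> Bt"
  shows "K^c * (1+r)^c * Br \<le> K^m * (1+t)^m * Bt"
proof -
  have a: "K^c \<le> K^m" using assms by (intro power_increasing) auto
  have "(1+r)^c \<le> (1+r)^m" using assms by (intro power_increasing) auto
  also have "\<dots> \<le> (1+t)^m" using assms by (intro power_mono) auto
  finally have b: "(1+r)^c \<le> (1+t)^m" .
  have c: "K^c * (1+r)^c \<le> K^m * (1+t)^m" using a b assms by (intro mult_mono) auto
  show ?thesis by (rule mult_mono[OF c assms(6)]) (use assms in auto)
qed

context sys begin

lemma main_ind:
  "\<forall>e\<in>E. card (D e) = n \<longrightarrow> (\<forall>t\<ge>0. \<bar>XD (D e) t\<bar> \<le> K^n * (1+t)^n * B t)"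
proof (induction n rule: less_induct)
  case (less n)
  show ?case
  proof (intro ballI impI allI)
    fix e t assume eE: "e \<in> E" and cn: "card (D e) = n" and t: "(0::real) \<le> t"
    obtain a b where eab: "e = (a,b)" by (cases e)
    have abE: "(a,b) \<in> E" using eE eab by simp
    have aI: "a \<in> II" and bJ: "b \<in> JJ" using abE ES by auto
    have n1: "1 \<le> n" using D_ne[OF eE] cn by simp
    define Q where "Q = K^(n-1) * (1+t)^(n-1) * B t"
    have Bt0: "0 \<le> B t" using B_nonneg t .
    have Q0: "0 \<le> Q" unfolding Q_def using K_ge1 t Bt0 by auto
    have inside: "\<bar>\<psi> k l r\<bar> \<le> Q" if kl: "(k,l) \<in> E" "(k,l) \<noteq> e" "k \<in> D e" and r: "0 \<le> r" "r \<le> t" for k l r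
    proof -
      have lD: "l \<in> D e" using closedD[OF kl(1,2)] kl(3) by simp
      have lt: "card (D (k,l)) < n" using D_mono[OF eE kl(1) kl(3) lD] cn by simp
      have ne0: "(k,l) \<noteq> (i0,j0)" using kl(3) i0_notin[of e] by auto
      have "\<bar>\<psi> k l r\<bar> = \<bar>XD (D (k,l)) r\<bar>" by (rule psi_abs[OF kl(1) ne0 r(1)])
      also have "\<dots> \<le> K^(card (D (k,l))) * (1+r)^(card (D (k,l))) * B r"
        using less.IH[OF lt] kl(1) r by auto
      also have "\<dots> \<le> Q" unfolding Q_def
        by (rule poly_mono) (use K_ge1 lt r B_nonneg B_mono in auto)
      finally show ?thesis .
    qed
    define f where "f = (\<lambda>p s. \<mu> (fst p) (snd p) * integral {0..s} (\<psi> (fst p) (snd p)))"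
    define SS where "SS = (D e \<inter> II) \<times> JJ"
    define R where "R = (\<lambda>s. \<Sum>p\<in>SS - {e}. f p s)"
    have finSS: "finite SS" unfolding SS_def using finI finJ by auto
    have fb: "\<bar>f p s\<bar> \<le> \<mu> (fst p) (snd p) * (t * Q)" if p: "p \<in> SS - {e}" and s: "0 \<le> s" "s \<le> t" for p s
    proof (cases "p \<in> E")
      case False
      thus ?thesis unfolding f_def using mu_zero[of "fst p" "snd p"] by simp
    next
      case True
      obtain k l where pkl: "p = (k,l)" by (cases p)
      have kl: "k \<in> II" "l \<in> JJ" "k \<in> D e" "(k,l) \<noteq> e" using p pkl unfolding SS_def by auto
      have "\<bar>integral {0..s} (\<psi> k l)\<bar> \<le> s * Q"
        by (rule int_abs_bound[OF ml_integ(1)[OF psi_ml[OF kl(1,2)] s(1)] s(1)])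
           (use inside True pkl kl s in auto)
      also have "\<dots> \<le> t * Q" using s Q0 by (intro mult_right_mono) auto
      finally show ?thesis unfolding f_def pkl using mu_nonneg[of k l]
        by (simp add: abs_mult mult_left_mono)
    qed
    have Rb: "\<bar>R s\<bar> \<le> Mmu * (t * Q)" if s: "0 \<le> s" "s \<le> t" for s
    proof -
      have "\<bar>R s\<bar> \<le> (\<Sum>p\<in>SS - {e}. \<bar>f p s\<bar>)" unfolding R_def by (rule sum_abs)
      also have "\<dots> \<le> (\<Sum>p\<in>SS - {e}. \<mu> (fst p) (snd p) * (t * Q))"
        by (rule sum_mono) (rule fb, use s in auto)
      also have "\<dots> \<le> (\<Sum>p\<in>II\<times>JJ. \<mu> (fst p) (snd p) * (t * Q))"
        by (rule sum_mono2) (use finI finJ SS_def mu_nonneg t Q0 in auto)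
      also have "\<dots> = Mmu * (t * Q)" unfolding Mmu_cart by (simp add: sum_distrib_right)
      finally show ?thesis .
    qed
    define WD where "WD = (\<lambda>s. \<Sum>k\<in>D e\<inter>II. w k s)"
    have eqS: "XD (D e) s = WD s - R s - (if a \<in> D e then f e s else 0)" if s: "0 \<le> s" for s
    proof -
      have "(\<Sum>k\<in>D e\<inter>II. \<Sum>l\<in>JJ. \<mu> k l * integral {0..s} (\<psi> k l)) = (\<Sum>p\<in>SS. f p s)"
        unfolding SS_def f_def by (simp add: sum.cartesian_product case_prod_beta)
      also have "\<dots> = R s + (if a \<in> D e then f e s else 0)"
      proof (cases "a \<in> D e")
        case True
        hence "e \<in> SS" unfolding SS_def eab using aI bJ by auto
        thus ?thesis using True finSS unfolding R_def by (simp add: sum.remove)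
      next
        case False
        hence "e \<notin> SS" unfolding SS_def eab by auto
        hence "SS - {e} = SS" by auto
        thus ?thesis using False unfolding R_def by simp
      qed
      finally show ?thesis using XD_eq[OF s i0_notin] unfolding WD_def by simp
    qed
    define M where "M = (1 + Mmu * K^(n-1)) * (1+t)^n * B t"
    have Vb: "\<forall>s\<in>{0..t}. \<bar>WD s - R s\<bar> \<le> M"
    proof
      fix s assume s: "s \<in> {0..t}"
      have p1: "1 \<le> (1+t)^n" using t by simp
      have "(1+t)^n = (1+t) * (1+t)^(n-1)" using n1 by (metis power_eq_if not_one_le_zero)
      hence p2: "t * (1+t)^(n-1) \<le> (1+t)^n" using t by (simp add: mult_right_mono)
      have "\<bar>WD s\<bar> \<le> B t" unfolding WD_def using wD_bound s by auto
      also have "\<dots> \<le> (1+t)^n * B t" using p1 Bt0 by (simp add: mult_le_cancel_right1)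
      finally have w1: "\<bar>WD s\<bar> \<le> (1+t)^n * B t" .
      have "Mmu * (t * Q) = (Mmu * K^(n-1) * B t) * (t * (1+t)^(n-1))" unfolding Q_def by simp
      also have "\<dots> \<le> (Mmu * K^(n-1) * B t) * (1+t)^n"
        using p2 Mmu_nonneg K_ge1 Bt0 by (intro mult_left_mono) auto
      finally have "\<bar>R s\<bar> \<le> (Mmu * K^(n-1) * B t) * (1+t)^n" using Rb s by force
      with w1 show "\<bar>WD s - R s\<bar> \<le> M" unfolding M_def by (simp add: algebra_simps)
    qed
    have M0: "0 \<le> M" unfolding M_def using Mmu_nonneg K_ge1 t Bt0 by auto
    have bound2M: "\<bar>XD (D e) t\<bar> \<le> 2 * M"
    proof (cases "a \<in> D e")
      case False
      have "\<bar>WD t - R t\<bar> \<le> M" using Vb t by auto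
      thus ?thesis using False eqS[OF t] M0 by auto
    next
      case True
      have pe: "\<psi> a b r = XD (D e) r" if "0 \<le> r" for r
        using psi_pos[OF abE _ that] True eab by simp
      show ?thesis
      proof (rule scalar_bound[OF t Vb])
        show "(\<lambda>r. - \<mu> a b * XD (D e) r) integrable_on {0..t}"
          by (intro integrable_on_mult_right ml_integ(1)[OF XD_ml t])
        show "\<forall>s\<in>{0..t}. XD (D e) s = WD s - R s + integral {0..s} (\<lambda>r. - \<mu> a b * XD (D e) r)"
        proof
          fix s assume s: "s \<in> {0..t}"
          have "integral {0..s} (\<psi> a b) = integral {0..s} (XD (D e))"
            by (rule integral_cong) (use pe in auto)
          thus "XD (D e) s = WD s - R s + integral {0..s} (\<lambda>r. - \<mu> a b * XD (D e) r)"
            using eqS[of s] s True unfolding f_def eab by simp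
        qed
        show "\<forall>r\<in>{0..t}. (0 < XD (D e) r \<longrightarrow> - \<mu> a b * XD (D e) r \<le> 0) \<and>
                         (XD (D e) r < 0 \<longrightarrow> 0 \<le> - \<mu> a b * XD (D e) r)"
          using mu_pos[OF abE] by (auto simp: mult_pos_pos mult_pos_neg less_imp_le)
      qed
    qed
    have "2 * M \<le> K^n * (1+t)^n * B t"
    proof -
      have Kn: "K^n = K * K^(n-1)" using n1 by (metis power_eq_if not_one_le_zero)
      have k1: "1 \<le> K^(n-1)" by (rule one_le_power[OF K_ge1])
      have "K^n = 2*K^(n-1) + 2*Mmu*K^(n-1)" unfolding Kn by (simp add: K_def algebra_simps)
      hence c1: "2 * (1 + Mmu * K^(n-1)) \<le> K^n" using k1 by (simp add: algebra_simps)
      have nn: "0 \<le> (1+t)^n * B t" using t Bt0 by simp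
      have "2 * M = (2 * (1 + Mmu * K^(n-1))) * ((1+t)^n * B t)" unfolding M_def by simp
      also have "\<dots> \<le> K^n * ((1+t)^n * B t)" by (rule mult_right_mono[OF c1 nn])
      finally show ?thesis by simp
    qed
    with bound2M show "\<bar>XD (D e) t\<bar> \<le> K^n * (1+t)^n * B t" by linarith
  qed
qed

end

context sys begin

definition N :: nat where "N = nI + nJ"
definition P :: "real \<Rightarrow> real" where "P t = K^N * (1+t)^N * B t"
definition fI :: "nat \<times> nat \<Rightarrow> real \<Rightarrow> real" where
  "fI p s = \<mu> (fst p) (snd p) * integral {0..s} (\<psi> (fst p) (snd p))"
definition Theta :: real where "Theta = (\<Sum>k\<in>II. \<theta> k)"
definition M0 :: "real \<Rightarrow> real" where "M0 t = (1 + 2 * Mmu * t) * P t"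

lemma P_mono: "0 \<le> s \<Longrightarrow> s \<le> t \<Longrightarrow> P s \<le> P t"
  unfolding P_def by (rule poly_mono) (use K_ge1 B_nonneg B_mono in auto)

lemma P_nonneg: "0 \<le> t \<Longrightarrow> 0 \<le> P t"
  unfolding P_def using K_ge1 B_nonneg by simp

lemma B_le_P: "0 \<le> t \<Longrightarrow> B t \<le> P t"
proof -
  assume t: "0 \<le> t"
  have "K^0 * (1+t)^0 * B t \<le> P t" unfolding P_def by (rule poly_mono) (use K_ge1 B_nonneg t in auto)
  thus ?thesis by simp
qed

lemma XD_bound: "e \<in> E \<Longrightarrow> 0 \<le> t \<Longrightarrow> \<bar>XD (D e) t\<bar> \<le> P t"
proof -
  assume e: "e \<in> E" and t: "0 \<le> t"
  have "\<bar>XD (D e) t\<bar> \<le> K^(card (D e)) * (1+t)^(card (D e)) * B t" using main_ind e t by blast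
  also have "\<dots> \<le> P t" unfolding P_def
    by (rule poly_mono) (use K_ge1 B_nonneg t D_card_le N_def in auto)
  finally show ?thesis .
qed

lemma psi_bnd: "(k,l) \<in> E \<Longrightarrow> (k,l) \<noteq> (i0,j0) \<Longrightarrow> 0 \<le> r \<Longrightarrow> \<bar>\<psi> k l r\<bar> \<le> P r"
  using psi_abs XD_bound by metis

lemma M0_mono: "0 \<le> s \<Longrightarrow> s \<le> t \<Longrightarrow> M0 s \<le> M0 t"
  unfolding M0_def using Mmu_nonneg P_nonneg P_mono
  by (intro mult_mono) (auto intro: mult_left_mono)

lemma M0_nonneg: "0 \<le> t \<Longrightarrow> 0 \<le> M0 t"
  unfolding M0_def using Mmu_nonneg P_nonneg by simp

lemma mu_le_Mmu: "k \<in> II \<Longrightarrow> l \<in> JJ \<Longrightarrow> \<mu> k l \<le> Mmu"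
  unfolding Mmu_cart using finI finJ mu_nonneg
  by (intro member_le_sum[where i="(k,l)" and f="\<lambda>p. \<mu> (fst p) (snd p)", simplified]) auto

lemma yterm:
  assumes k: "k \<in> II" and t: "0 \<le> t"
  shows "\<theta> k * (LBINT s=0..t. (if k = i0 then pospart (\<Sum>k\<in>II. x k s) else 0))
       = (if k = i0 then \<theta> i0 * integral {0..t} (\<lambda>r. pospart (Sx r)) else 0)"
proof (cases "k = i0")
  case True
  thus ?thesis using ml_integ(2)[OF pos_ml t] unfolding Sx_def by simp
next
  case False
  thus ?thesis by simp
qed

lemma x_eq:
  assumes k: "k \<in> II" and t: "0 \<le> t"
  shows "x k t = w k t - (\<Sum>l\<in>JJ. fI (k,l) t) - (if k = i0 then \<theta> i0 * integral {0..t} (\<lambda>r. pospart (Sx r)) else 0)"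
  using H4 k t yterm[OF k t] ml_integ(2)[OF psi_ml[OF k] t] unfolding fI_def by auto

lemma Sx_eq:
  assumes t: "0 \<le> t"
  shows "Sx t = (\<Sum>k\<in>II. w k t) - (\<Sum>p\<in>II\<times>JJ. fI p t) - \<theta> i0 * integral {0..t} (\<lambda>r. pospart (Sx r))"
proof -
  have "Sx t = (\<Sum>k\<in>II. x k t)" by (simp only: Sx_def)
  also have "\<dots> = (\<Sum>k\<in>II. w k t - (\<Sum>l\<in>JJ. fI (k,l) t) - (if k = i0 then \<theta> i0 * integral {0..t} (\<lambda>r. pospart (Sx r)) else 0))"
    using x_eq t by (intro sum.cong) auto
  also have "\<dots> = (\<Sum>k\<in>II. w k t) - (\<Sum>k\<in>II. \<Sum>l\<in>JJ. fI (k,l) t) - \<theta> i0 * integral {0..t} (\<lambda>r. pospart (Sx r))"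
    using i0I finI by (simp add: sum_subtractf sum.delta)
  finally show ?thesis by (simp add: sum.cartesian_product case_prod_beta)
qed

lemma root:
  assumes t: "0 \<le> t"
  shows "\<bar>Sx t\<bar> \<le> 2 * M0 t"
proof -
  define \<mu>0 where "\<mu>0 = \<mu> i0 j0"
  define \<theta>0 where "\<theta>0 = \<theta> i0"
  define R0 where "R0 = (\<lambda>s. \<Sum>p\<in>II\<times>JJ - {(i0,j0)}. fI p s)"
  define W where "W = (\<lambda>s. \<Sum>k\<in>II. w k s)"
  define X0 where "X0 = XD (D (i0,j0))"
  define V where "V = (\<lambda>s. W s - R0 s + \<mu>0 * integral {0..s} X0)"
  define h where "h = (\<lambda>r. \<mu>0 * negpart (Sx r) - \<theta>0 * pospart (Sx r))"
  have mu0: "0 \<le> \<mu>0" "\<mu>0 \<le> Mmu" unfolding \<mu>0_def using mu_nonneg mu_le_Mmu i0I j0J by auto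
  have th0: "0 \<le> \<theta>0" unfolding \<theta>0_def using theta_nonneg i0I by auto
  have Pt: "0 \<le> P t" using P_nonneg t .
  have fin2: "finite (II\<times>JJ)" using finI finJ by auto
  have R0b: "\<bar>R0 s\<bar> \<le> Mmu * (t * P t)" if s: "0 \<le> s" "s \<le> t" for s
  proof -
    have fb: "\<bar>fI p s\<bar> \<le> \<mu> (fst p) (snd p) * (t * P t)" if p: "p \<in> II\<times>JJ - {(i0,j0)}" for p
    proof (cases "p \<in> E")
      case False thus ?thesis unfolding fI_def using mu_zero[of "fst p" "snd p"] by simp
    next
      case True
      obtain k l where pkl: "p = (k,l)" by (cases p)
      have kl: "k \<in> II" "l \<in> JJ" "(k,l) \<noteq> (i0,j0)" using p pkl by auto
      have "\<bar>integral {0..s} (\<psi> k l)\<bar> \<le> s * P t"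
      proof (rule int_abs_bound[OF ml_integ(1)[OF psi_ml[OF kl(1,2)] s(1)] s(1)], rule ballI)
        fix r assume r: "r \<in> {0..s}"
        have "\<bar>\<psi> k l r\<bar> \<le> P r" using psi_bnd True pkl kl r by auto
        also have "\<dots> \<le> P t" using P_mono r s by auto
        finally show "\<bar>\<psi> k l r\<bar> \<le> P t" .
      qed
      also have "\<dots> \<le> t * P t" using s Pt by (intro mult_right_mono) auto
      finally show ?thesis unfolding fI_def pkl using mu_nonneg[of k l]
        by (simp add: abs_mult mult_left_mono)
    qed
    have "\<bar>R0 s\<bar> \<le> (\<Sum>p\<in>II\<times>JJ - {(i0,j0)}. \<bar>fI p s\<bar>)" unfolding R0_def by (rule sum_abs)
    also have "\<dots> \<le> (\<Sum>p\<in>II\<times>JJ - {(i0,j0)}. \<mu> (fst p) (snd p) * (t * P t))"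
      by (rule sum_mono) (rule fb)
    also have "\<dots> \<le> (\<Sum>p\<in>II\<times>JJ. \<mu> (fst p) (snd p) * (t * P t))"
      by (rule sum_mono2) (use fin2 mu_nonneg t Pt in auto)
    also have "\<dots> = Mmu * (t * P t)" unfolding Mmu_cart by (simp add: sum_distrib_right)
    finally show ?thesis .
  qed
  have Vb: "\<forall>s\<in>{0..t}. \<bar>V s\<bar> \<le> M0 t"
  proof
    fix s assume s: "s \<in> {0..t}"
    have s0: "0 \<le> s" using s by simp
    have "\<bar>W s\<bar> \<le> B t" unfolding W_def using wD_bound[of s t II] s by auto
    also have "\<dots> \<le> P t" using B_le_P t .
    finally have a1: "\<bar>W s\<bar> \<le> P t" .
    have a2: "\<bar>R0 s\<bar> \<le> Mmu * (t * P t)" using R0b s by auto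
    have "\<bar>integral {0..s} X0\<bar> \<le> s * P t"
      unfolding X0_def
    proof (rule int_abs_bound[OF ml_integ(1)[OF XD_ml s0] s0], rule ballI)
      fix r assume r: "r \<in> {0..s}"
      have "\<bar>XD (D (i0, j0)) r\<bar> \<le> P r" using XD_bound[OF edge0] r by auto
      also have "\<dots> \<le> P t" using P_mono r s by auto
      finally show "\<bar>XD (D (i0, j0)) r\<bar> \<le> P t" .
    qed
    also have "\<dots> \<le> t * P t" using s Pt by (intro mult_right_mono) auto
    finally have "\<bar>\<mu>0 * integral {0..s} X0\<bar> \<le> \<mu>0 * (t * P t)" using mu0
      by (simp add: abs_mult mult_left_mono)
    also have "\<dots> \<le> Mmu * (t * P t)" using mu0 t Pt by (intro mult_right_mono) auto
    finally have a3: "\<bar>\<mu>0 * integral {0..s} X0\<bar> \<le> Mmu * (t * P t)" .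
    have "\<bar>V s\<bar> \<le> \<bar>W s\<bar> + \<bar>R0 s\<bar> + \<bar>\<mu>0 * integral {0..s} X0\<bar>" unfolding V_def by linarith
    also have "\<dots> \<le> P t + Mmu * (t * P t) + Mmu * (t * P t)" using a1 a2 a3 by linarith
    also have "\<dots> = M0 t" unfolding M0_def by (simp add: algebra_simps)
    finally show "\<bar>V s\<bar> \<le> M0 t" .
  qed
  have hint: "h integrable_on {0..t}"
    unfolding h_def
    by (intro integrable_diff integrable_on_mult_right ml_integ(1)[OF neg_ml t] ml_integ(1)[OF pos_ml t])
  have eq: "\<forall>s\<in>{0..t}. Sx s = V s + integral {0..s} h"
  proof
    fix s assume s: "s \<in> {0..t}"
    hence s0: "0 \<le> s" by simp
    have "(\<Sum>p\<in>II\<times>JJ. fI p s) = fI (i0,j0) s + R0 s"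
      unfolding R0_def using sum.remove[OF fin2, of "(i0,j0)" "\<lambda>p. fI p s"] i0I j0J by simp
    moreover have "integral {0..s} (\<psi> i0 j0) = integral {0..s} (\<lambda>r. - negpart (Sx r) - X0 r)"
      unfolding X0_def by (rule integral_cong) (use psi0_eq in auto)
    moreover have "integral {0..s} (\<lambda>r. - negpart (Sx r) - X0 r)
        = - integral {0..s} (\<lambda>r. negpart (Sx r)) - integral {0..s} X0"
      using integral_diff[OF integrable_neg[OF ml_integ(1)[OF neg_ml s0]] ml_integ(1)[OF XD_ml s0]]
      unfolding X0_def by (simp add: integral_neg)
    moreover have "integral {0..s} h = \<mu>0 * integral {0..s} (\<lambda>r. negpart (Sx r)) - \<theta>0 * integral {0..s} (\<lambda>r. pospart (Sx r))"
      unfolding h_def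
      using integral_diff[OF integrable_on_mult_right[OF ml_integ(1)[OF neg_ml s0]]
          integrable_on_mult_right[OF ml_integ(1)[OF pos_ml s0]]] by simp
    ultimately show "Sx s = V s + integral {0..s} h"
      using Sx_eq[OF s0] unfolding V_def W_def fI_def \<mu>0_def \<theta>0_def
      by (simp add: algebra_simps)
  qed
  have sg: "\<forall>r\<in>{0..t}. (Sx r > 0 \<longrightarrow> h r \<le> 0) \<and> (Sx r < 0 \<longrightarrow> h r \<ge> 0)"
    unfolding h_def pospart_def negpart_def using mu0 th0 by (auto simp: mult_nonneg_nonpos mult_nonneg_nonneg)
  show ?thesis by (rule scalar_bound[OF t Vb hint eq sg])
qed

end

context sys begin

definition Cst :: real where "Cst = K^N * (1 + (Mmu + Theta) * (3 + 4 * Mmu))"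

lemma Theta_nonneg: "0 \<le> Theta" unfolding Theta_def using theta_nonneg by (simp add: sum_nonneg)

lemma final_bound:
  assumes t: "0 \<le> t"
  shows "(\<Sum>k\<in>II. \<bar>x k t\<bar>) \<le> Cst * (1+t)^(N+2) * B t"
proof -
  define G where "G = 2 * M0 t + P t"
  have Pt: "0 \<le> P t" using P_nonneg t .
  have G0: "0 \<le> G" unfolding G_def using M0_nonneg[OF t] Pt by simp
  have Sxb: "\<bar>Sx r\<bar> \<le> 2 * M0 t" if r: "0 \<le> r" "r \<le> t" for r
    using root[OF r(1)] M0_mono[OF r] by linarith
  have psiG: "\<bar>\<psi> k l r\<bar> \<le> G" if kl: "k \<in> II" "l \<in> JJ" and r: "0 \<le> r" "r \<le> t" for k l r
  proof (cases "(k,l) \<in> E")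
    case False thus ?thesis using H3 kl r G0 by auto
  next
    case True
    show ?thesis
    proof (cases "(k,l) = (i0,j0)")
      case True
      hence "\<psi> k l r = - negpart (Sx r) - XD (D (i0,j0)) r" using psi0_eq r by auto
      hence "\<bar>\<psi> k l r\<bar> \<le> \<bar>Sx r\<bar> + \<bar>XD (D (i0,j0)) r\<bar>" unfolding negpart_def by auto
      moreover have "\<bar>XD (D (i0,j0)) r\<bar> \<le> P t" using XD_bound[OF edge0 r(1)] P_mono[OF r] by linarith
      ultimately show ?thesis using Sxb[OF r] unfolding G_def by linarith
    next
      case False
      have "\<bar>\<psi> k l r\<bar> \<le> P r" by (rule psi_bnd[OF \<open>(k,l) \<in> E\<close> False r(1)])
      thus ?thesis using P_mono[OF r] M0_nonneg[OF t] unfolding G_def by linarith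
    qed
  qed
  have posG: "\<bar>pospart (Sx r)\<bar> \<le> G" if r: "0 \<le> r" "r \<le> t" for r
    using Sxb[OF r] pospart_abs[of "Sx r"] Pt unfolding G_def by linarith
  have xk: "\<bar>x k t\<bar> \<le> \<bar>w k t\<bar> + (\<Sum>l\<in>JJ. \<mu> k l) * (t * G) + \<theta> k * (t * G)" if k: "k \<in> II" for k
  proof -
    have f1: "\<bar>fI (k,l) t\<bar> \<le> \<mu> k l * (t * G)" if l: "l \<in> JJ" for l
    proof -
      have "\<bar>integral {0..t} (\<psi> k l)\<bar> \<le> t * G"
        by (rule int_abs_bound[OF ml_integ(1)[OF psi_ml[OF k l] t] t]) (use psiG k l in auto)
      thus ?thesis unfolding fI_def using mu_nonneg[of k l] by (simp add: abs_mult mult_left_mono)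
    qed
    have "\<bar>\<Sum>l\<in>JJ. fI (k,l) t\<bar> \<le> (\<Sum>l\<in>JJ. \<bar>fI (k,l) t\<bar>)" by (rule sum_abs)
    also have "\<dots> \<le> (\<Sum>l\<in>JJ. \<mu> k l * (t * G))" by (rule sum_mono) (rule f1)
    also have "\<dots> = (\<Sum>l\<in>JJ. \<mu> k l) * (t * G)" by (simp add: sum_distrib_right)
    finally have a1: "\<bar>\<Sum>l\<in>JJ. fI (k,l) t\<bar> \<le> (\<Sum>l\<in>JJ. \<mu> k l) * (t * G)" .
    have a2: "\<bar>if k = i0 then \<theta> i0 * integral {0..t} (\<lambda>r. pospart (Sx r)) else 0\<bar> \<le> \<theta> k * (t * G)"
    proof (cases "k = i0")
      case True
      have "\<bar>integral {0..t} (\<lambda>r. pospart (Sx r))\<bar> \<le> t * G"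
        by (rule int_abs_bound[OF ml_integ(1)[OF pos_ml t] t]) (use posG in auto)
      thus ?thesis using True theta_nonneg[OF k] by (simp add: abs_mult mult_left_mono)
    next
      case False thus ?thesis using theta_nonneg[OF k] t G0 by simp
    qed
    show ?thesis using x_eq[OF k t] a1 a2 by linarith
  qed
  have "(\<Sum>k\<in>II. \<bar>x k t\<bar>) \<le> (\<Sum>k\<in>II. \<bar>w k t\<bar> + (\<Sum>l\<in>JJ. \<mu> k l) * (t * G) + \<theta> k * (t * G))"
    by (rule sum_mono) (rule xk)
  also have "\<dots> = (\<Sum>k\<in>II. \<bar>w k t\<bar>) + Mmu * (t * G) + Theta * (t * G)"
    unfolding Mmu_def Theta_def by (simp add: sum.distrib sum_distrib_right)
  also have "\<dots> \<le> B t + (Mmu + Theta) * (t * G)"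
    using B_ge[OF t order_refl] by (simp add: algebra_simps)
  finally have s1: "(\<Sum>k\<in>II. \<bar>x k t\<bar>) \<le> B t + (Mmu + Theta) * (t * G)" .
  have Geq: "G = (3 + 4 * Mmu * t) * P t" unfolding G_def M0_def by (simp add: algebra_simps)
  have poly: "t * (3 + 4 * Mmu * t) \<le> (3 + 4 * Mmu) * (1+t)^2"
  proof -
    have "(3 + 4 * Mmu) * (1+t)^2 - t * (3 + 4 * Mmu * t) = 3 + 3*t + 3*t^2 + 4*Mmu + 8*Mmu*t"
      by (simp add: power2_eq_square algebra_simps)
    moreover have "0 \<le> 3 + 3*t + 3*t^2 + 4*Mmu + 8*Mmu*t" using t Mmu_nonneg by simp
    ultimately show ?thesis by linarith
  qed
  have tG: "t * G \<le> (3 + 4 * Mmu) * (1+t)^2 * P t"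
    unfolding Geq using mult_right_mono[OF poly Pt] by (simp add: mult.assoc)
  have p1: "1 \<le> (1+t)^2" using t by simp
  have Bb: "B t \<le> (1+t)^2 * P t"
    using B_le_P[OF t] mult_right_mono[OF p1 Pt] by simp
  have "(Mmu + Theta) * (t * G) \<le> (Mmu + Theta) * ((3 + 4 * Mmu) * (1+t)^2 * P t)"
    using tG Mmu_nonneg Theta_nonneg by (intro mult_left_mono) auto
  with s1 Bb have "(\<Sum>k\<in>II. \<bar>x k t\<bar>) \<le> (1 + (Mmu + Theta) * (3 + 4 * Mmu)) * ((1+t)^2 * P t)"
    by (simp add: algebra_simps)
  also have "\<dots> = Cst * (1+t)^(N+2) * B t"
    unfolding Cst_def P_def power_add by (simp only: mult_ac)
  finally show ?thesis .
qed

lemma final_powr: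
  assumes t: "0 \<le> t"
  shows "(\<Sum>k\<in>II. \<bar>x k t\<bar>) \<le> (Cst + real N + 2) * (1+t) powr (Cst + real N + 2) * B t"
proof -
  have C0: "0 \<le> Cst" unfolding Cst_def using K_ge1 Mmu_nonneg Theta_nonneg by simp
  have Bt: "0 \<le> B t" using B_nonneg t .
  have "(1+t)^(N+2) = (1+t) powr real (N+2)" using t by (subst powr_realpow) auto
  also have "\<dots> \<le> (1+t) powr (Cst + real N + 2)" using t C0 by (intro powr_mono) auto
  finally have a: "(1+t)^(N+2) \<le> (1+t) powr (Cst + real N + 2)" .
  have "Cst * (1+t)^(N+2) \<le> (Cst + real N + 2) * (1+t) powr (Cst + real N + 2)"
    using a C0 t by (intro mult_mono) auto
  hence "Cst * (1+t)^(N+2) * B t \<le> (Cst + real N + 2) * (1+t) powr (Cst + real N + 2) * B t"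
    using Bt by (rule mult_right_mono)
  with final_bound[OF t] show ?thesis by linarith
qed

end

theorem proposition3:
  fixes nI nJ :: nat and E :: "(nat \<times> nat) set"
    and \<mu> :: "nat \<Rightarrow> nat \<Rightarrow> real" and \<theta> :: "nat \<Rightarrow> real"
    and i0 j0 :: nat
  assumes tree: "is_tree nI nJ E"
    and mu_pos: "\<And>i j. (i, j) \<in> E \<Longrightarrow> \<mu> i j > 0"
    and mu_zero: "\<And>i j. (i, j) \<notin> E \<Longrightarrow> \<mu> i j = 0"
    and theta_nonneg: "\<And>i. i \<in> Iset nI \<Longrightarrow> \<theta> i \<ge> 0"
    and edge0: "(i0, j0) \<in> E"
    and mu_ge: "\<mu> i0 j0 \<ge> \<theta> i0"
  shows "\<exists>m7::real. \<forall>(w :: nat \<Rightarrow> real \<Rightarrow> real) (x :: nat \<Rightarrow> real \<Rightarrow> real)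
            (\<psi> :: nat \<Rightarrow> nat \<Rightarrow> real \<Rightarrow> real).
     let y = (\<lambda>i t. if i = i0 then pospart (\<Sum>k\<in>Iset nI. x k t) else 0);
         z = (\<lambda>j t. if j = j0 then negpart (\<Sum>k\<in>Iset nI. x k t) else 0)
     in
     ((\<forall>i\<in>Iset nI. meas_locbdd (w i) \<and> meas_locbdd (x i)) \<and>
      (\<forall>i\<in>Iset nI. \<forall>j\<in>Jset nI nJ. meas_locbdd (\<psi> i j)) \<and>
      (\<forall>i\<in>Iset nI. \<forall>j\<in>Jset nI nJ. (i, j) \<notin> E \<longrightarrow> (\<forall>t\<ge>0. \<psi> i j t = 0)) \<and>
      (\<forall>i\<in>Iset nI. \<forall>t\<ge>0.
          x i t = w i t - (\<Sum>j\<in>Jset nI nJ. \<mu> i j * (LBINT s=0..t. \<psi> i j s))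
                  - \<theta> i * (LBINT s=0..t. y i s)) \<and>
      (\<forall>i\<in>Iset nI. \<forall>t\<ge>0. (\<Sum>j\<in>Jset nI nJ. \<psi> i j t) = x i t - y i t) \<and>
      (\<forall>j\<in>Jset nI nJ. \<forall>t\<ge>0. (\<Sum>i\<in>Iset nI. \<psi> i j t) = - z j t))
     \<longrightarrow> (\<forall>t\<ge>0. (\<Sum>i\<in>Iset nI. \<bar>x i t\<bar>) \<le> m7 * (1 + t) powr m7 * supnorm (Iset nI) w t)"
proof -
  define Mm where "Mm = (\<Sum>k\<in>Iset nI. \<Sum>l\<in>Jset nI nJ. \<mu> k l)"
  define Th where "Th = (\<Sum>k\<in>Iset nI. \<theta> k)"
  define m where "m = (2 * (1 + Mm))^(nI+nJ) * (1 + (Mm + Th) * (3 + 4 * Mm)) + real (nI+nJ) + 2"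
  show ?thesis
    apply (rule exI[of _ m])
    apply (intro allI)
    apply (simp only: Let_def)
    apply (intro impI allI)
    apply (elim conjE)
    subgoal premises prems for w x \<psi> t
    proof -
      interpret S: sys nI nJ E i0 j0 \<mu> \<theta> w x \<psi>
        by unfold_locales (use tree edge0 mu_pos mu_zero theta_nonneg prems in auto)
      have meq: "m = S.Cst + real S.N + 2"
        unfolding m_def S.Cst_def S.K_def S.Mmu_def S.Theta_def S.N_def Mm_def Th_def by simp
      have t0: "0 \<le> t" using prems by blast
      show ?thesis using S.final_powr[OF t0] unfolding S.B_def meq .
    qed
    done
qed


end
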